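(* Let $v>71$ and let $(X,\mathcal{B})$ be an STS$(v)$ with $X=\{1,\dots,v\}$. Then there is a sequencing $\pi=[x_1\,x_2\,\cdots\,x_v]$ of $X$ that is $4$-good for $(X,\mathcal{B})$, i.e. for every $1\le i\le v-3$, the set $\{x_i,x_{i+1},x_{i+2},x_{i+3}\}$ contains no block of $\mathcal{B}$.
   Context: A Steiner triple system of order $v$, STS$(v)$, is a pair $(X,\mathcal{B})$ where $X$ is a set of $v$ points and $\mathcal{B}$ is a set of 3-subsets of $X$ (blocks) such that every pair of distinct points lies in exactly one block. A sequencing of $X$ is an ordering $[x_1\,x_2\,\cdots\,x_v]$ of all points of $X$, each appearing exactly once. For an integer $\ell$, a sequencing is $\ell$-good if no $\ell$ consecutive points of it contain a block of $\mathcal{B}$. *)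

theory Defs
  imports Main
begin

definition steiner_triple_system :: "'a set \<Rightarrow> 'a set set \<Rightarrow> bool" where
  "steiner_triple_system X B \<longleftrightarrow>
     (\<forall>b\<in>B. b \<subseteq> X \<and> card b = 3) \<and>
     (\<forall>x\<in>X. \<forall>y\<in>X. x \<noteq> y \<longrightarrow> (\<exists>!b. b \<in> B \<and> {x, y} \<subseteq> b))"

definition sequencing :: "'a set \<Rightarrow> 'a list \<Rightarrow> bool" where
  "sequencing X xs \<longleftrightarrow> distinct xs \<and> set xs = X"

definition good_sequencing :: "nat \<Rightarrow> 'a set set \<Rightarrow> 'a list \<Rightarrow> bool" where
  "good_sequencing l B xs \<longleftrightarrow>
     (\<forall>i. i + l \<le> length xs \<longrightarrow> (\<forall>b\<in>B. \<not> b \<subseteq> set (take l (drop i xs))))"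

end

theory Submission
  imports Defs
begin

definition close3 :: "nat \<Rightarrow> nat \<Rightarrow> nat \<Rightarrow> bool" where
  "close3 a b c \<longleftrightarrow> a \<noteq> b \<and> a \<noteq> c \<and> b \<noteq> c \<and> a \<le> b + 3 \<and> b \<le> a + 3 \<and>
     a \<le> c + 3 \<and> c \<le> a + 3 \<and> b \<le> c + 3 \<and> c \<le> b + 3"

lemma close3_perm: "close3 a b c \<Longrightarrow> close3 b a c" "close3 a b c \<Longrightarrow> close3 b c a"
  "close3 a b c \<Longrightarrow> close3 a c b"
  unfolding close3_def by auto

lemma pairs9: "card {(a,b). a < b \<and> close3 a b p} \<le> 9" (is "card ?S \<le> 9")
proof -
  let ?f = "\<lambda>(a,b). (a + 3 - p, b + 3 - p)"
  let ?S9 = "{(0,1),(0,2),(1,2),(1,4),(2,4),(2,5),(4,5),(4,6),(5,6)} :: (nat\<times>nat) set"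
  have inj: "inj_on ?f ?S" by (auto simp: inj_on_def close3_def)
  have sub: "?f ` ?S \<subseteq> ?S9"
  proof
    fix x assume "x \<in> ?f ` ?S"
    then obtain a b where ab: "a < b" "close3 a b p" and x: "x = (a+3-p, b+3-p)" by auto
    define a' where "a' = a + 3 - p"
    define b' where "b' = b + 3 - p"
    have h: "a' < b'" "b' \<le> 6" "a' \<noteq> 3" "b' \<noteq> 3" "a' + 3 \<ge> b'"
      "b' \<le> 6" "a' \<ge> 0" "b' + 0 \<le> a' + 3"
      using ab unfolding a'_def b'_def close3_def by auto
    have "a' \<le> 6" using h by auto
    hence "(a', b') \<in> ?S9" using h
      by (auto simp: le_Suc_eq numeral_eq_Suc)
    thus "x \<in> ?S9" using x a'_def b'_def by simp
  qed
  have "card ?S = card (?f ` ?S)" using inj by (simp add: card_image)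
  also have "\<dots> \<le> card ?S9" by (rule card_mono) (use sub in auto)
  also have "card ?S9 = 9" by simp
  finally show ?thesis .
qed

lemma pairs3: "card {(a,b). a < b \<and> b < p \<and> close3 a b p} \<le> 3" (is "card ?S \<le> 3")
proof -
  let ?f = "\<lambda>(a,b). (a + 3 - p, b + 3 - p)"
  let ?S9 = "{(0,1),(0,2),(1,2)} :: (nat\<times>nat) set"
  have inj: "inj_on ?f ?S" by (auto simp: inj_on_def close3_def)
  have sub: "?f ` ?S \<subseteq> ?S9"
  proof
    fix x assume "x \<in> ?f ` ?S"
    then obtain a b where ab: "a < b" "b < p" "close3 a b p" and x: "x = (a+3-p, b+3-p)" by auto
    define a' where "a' = a + 3 - p"
    define b' where "b' = b + 3 - p"
    have h: "a' < b'" "b' < 3" 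
      using ab unfolding a'_def b'_def close3_def by auto
    hence "(a', b') \<in> ?S9" 
      by (auto simp: less_Suc_eq numeral_eq_Suc)
    thus "x \<in> ?S9" using x a'_def b'_def by simp
  qed
  have "card ?S = card (?f ` ?S)" using inj by (simp add: card_image)
  also have "\<dots> \<le> card ?S9" by (rule card_mono) (use sub in auto)
  also have "card ?S9 = 3" by simp
  finally show ?thesis .
qed

lemma finite_pairs: "finite {(a,b). a < b \<and> close3 a b p}"
proof -
  have "{(a,b). a < b \<and> close3 a b p} \<subseteq> {..p+3} \<times> {..p+3}" by (auto simp: close3_def)
  thus ?thesis by (rule finite_subset) auto
qed

lemma spoil4: assumes "a < b" "b \<le> a + 3" shows "card {j. close3 a b j} \<le> 4"
proof -
  have sub: "{j. close3 a b j} \<subseteq> {b-3..a+3} - {a,b}" by (auto simp: close3_def)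
  have ab: "{a,b} \<subseteq> {b-3..a+3}" using assms by auto
  have "card ({b-3..a+3} - {a,b}) = card {b-3..a+3} - 2"
    using ab assms by (simp add: card_Diff_subset)
  also have "\<dots> \<le> 4" using assms by auto
  finally show ?thesis using card_mono[OF _ sub] by (meson finite_Diff finite_atLeastAtMost le_trans)
qed

lemma near_card: "card {q::nat. q \<le> c + 3 \<and> c \<le> q + 3} \<le> 7"
proof -
  have "{q::nat. q \<le> c + 3 \<and> c \<le> q + 3} = {c-3..c+3}" by auto
  thus ?thesis by simp
qed

lemma near2_card: assumes "t \<le> t' + 3" "t' \<le> t + 3"
  shows "card ({q::nat. q \<le> t + 3 \<and> t \<le> q + 3} \<union> {q. q \<le> t' + 3 \<and> t' \<le> q + 3}) \<le> 10"
proof -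
  let ?l = "min t t'"
  have "{q::nat. q \<le> t + 3 \<and> t \<le> q + 3} \<union> {q. q \<le> t' + 3 \<and> t' \<le> q + 3} \<subseteq> {?l-3..?l+6}"
    using assms by auto
  moreover have "card {?l-3..?l+6} \<le> 10" by simp
  ultimately show ?thesis by (meson card_mono finite_atLeastAtMost le_trans)
qed

lemma nb_card: "card {c::nat. c < m \<and> c \<noteq> t \<and> c \<le> t+3 \<and> t \<le> c+3} \<le> 6"
proof -
  have "{c::nat. c < m \<and> c \<noteq> t \<and> c \<le> t+3 \<and> t \<le> c+3} \<subseteq> {t-3..t+3} - {t}" by auto
  moreover have "card ({t-3..t+3} - {t}) \<le> 6" by simp
  ultimately show ?thesis by (meson card_mono finite_Diff finite_atLeastAtMost le_trans)
qed



locale sts =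
  fixes v :: nat and B :: "nat set set"
  assumes sts: "steiner_triple_system {1..v} B"
begin

abbreviation "X \<equiv> {1..v}"

definition thd :: "nat \<Rightarrow> nat \<Rightarrow> nat" where
  "thd a b = (THE c. {a,b,c} \<in> B)"

lemma blk_card: "b \<in> B \<Longrightarrow> b \<subseteq> X \<and> card b = 3"
  using conjunct1[OF sts[unfolded steiner_triple_system_def]] by blast

lemma blk_uniq: assumes "a \<in> X" "b \<in> X" "a \<noteq> b" shows "\<exists>!k. k \<in> B \<and> {a,b} \<subseteq> k"
proof -
  have h: "\<forall>x\<in>X. \<forall>y\<in>X. x \<noteq> y \<longrightarrow> (\<exists>!b. b \<in> B \<and> {x, y} \<subseteq> b)"
    by (rule conjunct2[OF sts[unfolded steiner_triple_system_def]])
  show ?thesis using h[rule_format, OF assms] .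
qed

lemma blk_third_unique:
  assumes "a \<in> X" "b \<in> X" "a \<noteq> b" "{a,b,c} \<in> B" "{a,b,c'} \<in> B"
  shows "c = c'"
proof -
  have "{a,b,c} = {a,b,c'}"
    using blk_uniq[OF assms(1-3)]
  proof (rule ex1E)
    fix k assume k: "k \<in> B \<and> {a,b} \<subseteq> k" "\<forall>y. y \<in> B \<and> {a,b} \<subseteq> y \<longrightarrow> y = k"
    have s1: "{a,b} \<subseteq> {a,b,c}" "{a,b} \<subseteq> {a,b,c'}" by auto
    have "{a,b,c} = k" using k(2) assms(4) s1(1) by blast
    moreover have "{a,b,c'} = k" using k(2) assms(5) s1(2) by blast
    ultimately show ?thesis by simp
  qed
  moreover have "c \<notin> {a,b}"
  proof
    assume "c \<in> {a,b}" hence "{a,b,c} = {a,b}" by auto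
    thus False using blk_card[OF assms(4)] assms(3) by simp
  qed
  ultimately have "c \<in> {a,b,c'}" "c \<notin> {a,b}" by (blast, blast)
  thus ?thesis by blast
qed

lemma thd_props:
  assumes "a \<in> X" "b \<in> X" "a \<noteq> b"
  shows "{a,b,thd a b} \<in> B" "thd a b \<in> X" "thd a b \<noteq> a" "thd a b \<noteq> b"
proof -
  obtain k where k: "k \<in> B" "{a,b} \<subseteq> k" using blk_uniq[OF assms] by blast
  have c3: "card k = 3" and kX: "k \<subseteq> X" using blk_card[OF k(1)] by auto
  have "card (k - {a,b}) = 1" using c3 k(2) assms(3) by (simp add: card_Diff_subset)
  then obtain c where c: "k - {a,b} = {c}" by (auto simp: card_Suc_eq)
  hence kk: "k = {a,b,c}" using k(2) by auto
  have ex: "{a,b,c} \<in> B" using k(1) kk by simp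
  have "thd a b = c" unfolding thd_def
    by (rule the_equality) (use ex blk_third_unique[OF assms] in auto)
  thus "{a,b,thd a b} \<in> B" "thd a b \<in> X" "thd a b \<noteq> a" "thd a b \<noteq> b"
    using ex kX kk c by auto
qed

lemma blk_thd: assumes "a \<in> X" "b \<in> X" "a \<noteq> b" "{a,b,c} \<in> B" shows "c = thd a b"
  using blk_third_unique[OF assms(1-3) assms(4) thd_props(1)[OF assms(1-3)]] .

lemma thd_sym: "thd a b = thd b a"
  unfolding thd_def by (simp add: insert_commute)

lemma thd_swap: assumes "a \<in> X" "b \<in> X" "a \<noteq> b" "c = thd a b" shows "a = thd b c"
proof -
  have "{b,c,a} \<in> B" using thd_props(1)[OF assms(1-3)] assms(4) by (simp add: insert_commute)
  moreover have "c \<in> X" "b \<noteq> c" using thd_props[OF assms(1-3)] assms(4) by auto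
  ultimately show ?thesis using blk_thd[of b c a] assms(2) by auto
qed

lemma thd_inj: assumes "a \<in> X" "b \<in> X" "b' \<in> X" "a \<noteq> b" "a \<noteq> b'" "thd a b = thd a b'"
  shows "b = b'"
proof -
  have "b = thd a (thd b a)" using thd_swap[OF assms(2,1)] assms(4) by auto
  moreover have "b' = thd a (thd b' a)" using thd_swap[OF assms(3,1)] assms(5) by auto
  ultimately show ?thesis using assms(6) by (simp add: thd_sym)
qed

definition gd :: "nat list \<Rightarrow> bool" where
  "gd s \<longleftrightarrow> distinct s \<and> set s \<subseteq> X \<and> (\<forall>a b c. a < length s \<longrightarrow> b < length s \<longrightarrow> c < length s
      \<longrightarrow> close3 a b c \<longrightarrow> {s!a, s!b, s!c} \<notin> B)"

definition T :: "nat list \<Rightarrow> nat \<Rightarrow> nat set" where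
  "T s p = (\<lambda>(a,b). thd (s!a) (s!b)) ` {(a,b). a < b \<and> b < length s \<and> close3 a b p}"

lemma T_card: "card (T s p) \<le> 9" "finite (T s p)"
proof -
  have sub: "{(a,b). a < b \<and> b < length s \<and> close3 a b p} \<subseteq> {(a,b). a < b \<and> close3 a b p}" by auto
  have f: "finite {(a,b). a < b \<and> b < length s \<and> close3 a b p}"
    using finite_subset[OF sub finite_pairs] .
  show "finite (T s p)" unfolding T_def using f by simp
  have "card (T s p) \<le> card {(a,b). a < b \<and> b < length s \<and> close3 a b p}"
    unfolding T_def using f card_image_le by blast
  also have "\<dots> \<le> card {(a,b). a < b \<and> close3 a b p}" by (rule card_mono[OF finite_pairs sub])
  also have "\<dots> \<le> 9" by (rule pairs9)
  finally show "card (T s p) \<le> 9" .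
qed

lemma Tend_card: "card (T s (length s)) \<le> 3"
proof -
  have sub: "{(a,b). a < b \<and> b < length s \<and> close3 a b (length s)} \<subseteq> {(a,b). a < b \<and> close3 a b (length s)}" by auto
  have f: "finite {(a,b). a < b \<and> b < length s \<and> close3 a b (length s)}"
    using finite_subset[OF sub finite_pairs] .
  have "card (T s (length s)) \<le> card {(a,b). a < b \<and> b < length s \<and> close3 a b (length s)}"
    unfolding T_def using f card_image_le by blast
  also have "\<dots> \<le> 3" by (rule pairs3)
  finally show ?thesis .
qed

lemma gd_mem: "gd s \<Longrightarrow> a < length s \<Longrightarrow> s!a \<in> X"
  unfolding gd_def using nth_mem by blast

lemma gd_neq: "gd s \<Longrightarrow> a < length s \<Longrightarrow> b < length s \<Longrightarrow> a \<noteq> b \<Longrightarrow> s!a \<noteq> s!b"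
  unfolding gd_def by (simp add: nth_eq_iff_index_eq)

lemma notT: assumes "gd s" "z \<notin> T s p" "a < length s" "b < length s" "close3 a b p"
  shows "{s!a, s!b, z} \<notin> B"
proof
  assume bl: "{s!a, s!b, z} \<in> B"
  have ab: "a \<noteq> b" using assms(5) unfolding close3_def by auto
  show False
  proof (cases "a < b")
    case True
    have "z = thd (s!a) (s!b)" using blk_thd[OF gd_mem[OF assms(1,3)] gd_mem[OF assms(1,4)] gd_neq[OF assms(1,3,4) ab] bl] .
    hence "z \<in> T s p" unfolding T_def by (intro image_eqI[where x="(a,b)"]) (use True assms(4,5) in auto)
    thus False using assms(2) by simp
  next
    case False
    hence ba: "b < a" using ab by simp
    have bl': "{s!b, s!a, z} \<in> B" using bl by (simp add: insert_commute)
    have "z = thd (s!b) (s!a)" using blk_thd[OF gd_mem[OF assms(1,4)] gd_mem[OF assms(1,3)] gd_neq[OF assms(1,4,3)] bl'] ab by auto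
    hence "z \<in> T s p" unfolding T_def by (intro image_eqI[where x="(b,a)"]) (use ba assms(3,5) close3_perm(1) in auto)
    thus False using assms(2) by simp
  qed
qed

lemma gd_local:
  assumes "gd s" "distinct s'" "set s' \<subseteq> X"
    "\<forall>i<length s'. i \<notin> Ch \<longrightarrow> i < length s \<and> s'!i = s!i"
    "\<forall>p\<in>Ch. \<forall>a b. a < length s' \<longrightarrow> b < length s' \<longrightarrow> close3 a b p \<longrightarrow> {s'!a, s'!b, s'!p} \<notin> B"
  shows "gd s'"
  unfolding gd_def
proof (intro conjI allI impI)
  show "distinct s'" "set s' \<subseteq> X" using assms by auto
  fix a b c assume abc: "a < length s'" "b < length s'" "c < length s'" "close3 a b c"
  show "{s'!a, s'!b, s'!c} \<notin> B"
  proof (cases "a \<in> Ch")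
    case True
    have "close3 b c a" using abc(4) close3_perm by blast
    hence "{s'!b, s'!c, s'!a} \<notin> B" using assms(5) abc True by blast
    moreover have "{s'!a, s'!b, s'!c} = {s'!b, s'!c, s'!a}" by auto
    ultimately show ?thesis by simp
  next
    case na: False
    show ?thesis
    proof (cases "b \<in> Ch")
      case True
      have "close3 a c b" using abc(4) close3_perm by blast
      hence "{s'!a, s'!c, s'!b} \<notin> B" using assms(5) abc True by blast
      moreover have "{s'!a, s'!b, s'!c} = {s'!a, s'!c, s'!b}" by auto
      ultimately show ?thesis by simp
    next
      case nb: False
      show ?thesis
      proof (cases "c \<in> Ch")
        case True
        thus ?thesis using assms(5) abc by blast
      next
        case False
        have e: "a < length s \<and> s'!a = s!a" "b < length s \<and> s'!b = s!b" "c < length s \<and> s'!c = s!c"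
          using assms(4) abc na nb False by blast+
        have "{s!a, s!b, s!c} \<notin> B" using assms(1) e abc(4) unfolding gd_def by blast
        thus ?thesis using e by simp
      qed
    qed
  qed
qed

end

context sts begin

lemma gd_append:
  assumes g: "gd s" and y: "y \<in> X" "y \<notin> set s" "y \<notin> T s (length s)"
  shows "gd (s @ [y])"
proof (rule gd_local[OF g, where Ch="{length s}"])
  show "distinct (s @ [y])" using g y unfolding gd_def by auto
  show "set (s @ [y]) \<subseteq> X" using g y unfolding gd_def by auto
  show "\<forall>i<length (s @ [y]). i \<notin> {length s} \<longrightarrow> i < length s \<and> (s @ [y]) ! i = s ! i"
    by (auto simp: nth_append)
  show "\<forall>p\<in>{length s}. \<forall>a b. a < length (s @ [y]) \<longrightarrow> b < length (s @ [y]) \<longrightarrow> close3 a b p \<longrightarrow>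
        {(s @ [y]) ! a, (s @ [y]) ! b, (s @ [y]) ! p} \<notin> B"
  proof (intro ballI allI impI)
    fix p a b assume p: "p \<in> {length s}" and ab: "a < length (s @ [y])" "b < length (s @ [y])" "close3 a b p"
    have a: "a < length s" "b < length s" using ab p unfolding close3_def by auto
    have "{s!a, s!b, y} \<notin> B" using notT[OF g y(3) a ab(3)[unfolded p[simplified]]] p by simp
    thus "{(s @ [y]) ! a, (s @ [y]) ! b, (s @ [y]) ! p} \<notin> B" using a p by (simp add: nth_append)
  qed
qed

lemma gd_subst:
  assumes g: "gd s" and y: "y \<in> X" "y \<notin> set s" "y \<notin> T s j" and j: "j + 3 < length s"
    and e: "s!j \<notin> T s (length s)"
  shows "gd (s[j:=y] @ [s!j])"
proof (rule gd_local[OF g, where Ch="{j, length s}"])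
  have d: "distinct s" and sX: "set s \<subseteq> X" using g unfolding gd_def by auto
  have jl: "j < length s" using j by simp
  have su: "set (s[j:=y]) = insert y (set s - {s!j})" using set_update_distinct[OF d jl] .
  have "distinct (s[j:=y])" by (rule distinct_list_update[OF d]) (use y in auto)
  moreover have "s!j \<notin> set (s[j:=y])" using su y(2) jl by auto
  ultimately show "distinct (s[j:=y] @ [s!j])" by simp
  have "s!j \<in> X" using sX nth_mem jl by blast
  thus "set (s[j:=y] @ [s!j]) \<subseteq> X" using su sX y by auto
  show "\<forall>i<length (s[j:=y] @ [s!j]). i \<notin> {j, length s} \<longrightarrow> i < length s \<and> (s[j:=y] @ [s!j]) ! i = s ! i"
    by (auto simp: nth_append)
  show "\<forall>p\<in>{j, length s}. \<forall>a b. a < length (s[j:=y] @ [s!j]) \<longrightarrow> b < length (s[j:=y] @ [s!j]) \<longrightarrow> close3 a b p \<longrightarrow>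
        {(s[j:=y] @ [s!j]) ! a, (s[j:=y] @ [s!j]) ! b, (s[j:=y] @ [s!j]) ! p} \<notin> B"
  proof (intro ballI allI impI)
    fix p a b assume p: "p \<in> {j, length s}" and ab: "a < length (s[j:=y] @ [s!j])" "b < length (s[j:=y] @ [s!j])" "close3 a b p"
    show "{(s[j:=y] @ [s!j]) ! a, (s[j:=y] @ [s!j]) ! b, (s[j:=y] @ [s!j]) ! p} \<notin> B"
    proof (cases "p = j")
      case True
      have a: "a < length s" "b < length s" "a \<noteq> j" "b \<noteq> j" using ab True j unfolding close3_def by auto
      have "{s!a, s!b, y} \<notin> B" using notT[OF g y(3) a(1,2)] ab(3) True by simp
      thus ?thesis using a True jl by (simp add: nth_append)
    next
      case False
      hence pl: "p = length s" using p by simp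
      have a: "a < length s" "b < length s" "a \<noteq> j" "b \<noteq> j" using ab pl j unfolding close3_def by auto
      have "{s!a, s!b, s!j} \<notin> B" using notT[OF g e a(1,2)] ab(3) pl by simp
      thus ?thesis using a pl jl by (simp add: nth_append)
    qed
  qed
qed

lemma gd_swap:
  assumes g: "gd s" and tq: "t < length s" "q < length s" "t + 4 \<le> q \<or> q + 4 \<le> t"
    and c1: "s!q \<notin> T s t" and c2: "s!t \<notin> T s q"
  shows "gd (s[t := s!q, q := s!t])"
proof (rule gd_local[OF g, where Ch="{t, q}"])
  have d: "distinct s" and sX: "set s \<subseteq> X" using g unfolding gd_def by auto
  show "distinct (s[t := s!q, q := s!t])" using d tq by simp
  show "set (s[t := s!q, q := s!t]) \<subseteq> X" using sX tq by simp
  show "\<forall>i<length (s[t := s!q, q := s!t]). i \<notin> {t, q} \<longrightarrow> i < length s \<and> (s[t := s!q, q := s!t]) ! i = s ! i"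
    by auto
  show "\<forall>p\<in>{t, q}. \<forall>a b. a < length (s[t := s!q, q := s!t]) \<longrightarrow> b < length (s[t := s!q, q := s!t]) \<longrightarrow> close3 a b p \<longrightarrow>
        {(s[t := s!q, q := s!t]) ! a, (s[t := s!q, q := s!t]) ! b, (s[t := s!q, q := s!t]) ! p} \<notin> B"
  proof (intro ballI allI impI)
    fix p a b assume p: "p \<in> {t, q}" and ab: "a < length (s[t := s!q, q := s!t])" "b < length (s[t := s!q, q := s!t])" "close3 a b p"
    show "{(s[t := s!q, q := s!t]) ! a, (s[t := s!q, q := s!t]) ! b, (s[t := s!q, q := s!t]) ! p} \<notin> B"
    proof (cases "p = t")
      case True
      have a: "a < length s" "b < length s" "a \<noteq> t" "b \<noteq> t" "a \<noteq> q" "b \<noteq> q"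
        using ab True tq unfolding close3_def by auto
      have "{s!a, s!b, s!q} \<notin> B" using notT[OF g c1 a(1,2)] ab(3) True by simp
      moreover have "t \<noteq> q" using tq by auto
      ultimately show ?thesis using a True tq by simp
    next
      case False
      hence pl: "p = q" using p by simp
      have a: "a < length s" "b < length s" "a \<noteq> t" "b \<noteq> t" "a \<noteq> q" "b \<noteq> q"
        using ab pl tq unfolding close3_def by auto
      have "{s!a, s!b, s!t} \<notin> B" using notT[OF g c2 a(1,2)] ab(3) pl by simp
      moreover have "t \<noteq> q" using tq by auto
      ultimately show ?thesis using a pl tq by simp
    qed
  qed
qed

end

context sts begin

definition PP :: "nat list \<Rightarrow> (nat \<times> nat) set" where
  "PP s = {(a,b). a < b \<and> b < length s \<and> b \<le> a + 3 \<and> thd (s!a) (s!b) \<notin> set s}"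

definition Phi :: "nat list \<Rightarrow> nat" where "Phi s = card (PP s)"

definition Pe :: "nat list \<Rightarrow> nat \<Rightarrow> (nat \<times> nat) set" where
  "Pe s y = {(a,b). a < b \<and> b < length s \<and> b \<le> a + 3 \<and> thd (s!a) (s!b) = y}"

lemma Pe_finite: "finite (Pe s y)"
proof -
  have "Pe s y \<subseteq> {..<length s} \<times> {..<length s}" unfolding Pe_def by auto
  thus ?thesis by (rule finite_subset) auto
qed

lemma edges_card:
  assumes g: "gd s"
  shows "card (fst ` Pe s y \<union> snd ` Pe s y) = 2 * card (Pe s y)"
proof -
  have d: "distinct s" using g unfolding gd_def by auto
  have inj1: "inj_on fst (Pe s y)"
  proof (rule inj_onI)
    fix x z assume x: "x \<in> Pe s y" and z: "z \<in> Pe s y" and e: "fst x = fst z"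
    obtain a b where ab: "x = (a,b)" by (cases x)
    obtain c e' where ce: "z = (c,e')" by (cases z)
    have h: "a < b" "b < length s" "c < e'" "e' < length s" "thd (s!a) (s!b) = y" "thd (s!c) (s!e') = y" "a = c"
      using x z e ab ce unfolding Pe_def by auto
    have "s!b = s!e'"
      by (rule thd_inj[of "s!a"]) (use h gd_mem[OF g] gd_neq[OF g] in auto)
    hence "b = e'" using h d by (simp add: nth_eq_iff_index_eq)
    thus "x = z" using ab ce h by simp
  qed
  have inj2: "inj_on snd (Pe s y)"
  proof (rule inj_onI)
    fix x z assume x: "x \<in> Pe s y" and z: "z \<in> Pe s y" and e: "snd x = snd z"
    obtain a b where ab: "x = (a,b)" by (cases x)
    obtain c e' where ce: "z = (c,e')" by (cases z)
    have h: "a < b" "b < length s" "c < e'" "e' < length s" "thd (s!b) (s!a) = y" "thd (s!e') (s!c) = y" "b = e'"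
      using x z e ab ce unfolding Pe_def by (auto simp: thd_sym)
    have "s!a = s!c"
      by (rule thd_inj[of "s!b"]) (use h gd_mem[OF g] gd_neq[OF g] in auto)
    hence "a = c" using h d by (simp add: nth_eq_iff_index_eq)
    thus "x = z" using ab ce h by simp
  qed
  have disj: "fst ` Pe s y \<inter> snd ` Pe s y = {}"
  proof (rule ccontr)
    assume "fst ` Pe s y \<inter> snd ` Pe s y \<noteq> {}"
    then obtain a b c where ab: "(a,b) \<in> Pe s y" and ca: "(c,a) \<in> Pe s y" by force
    have h: "a < b" "b < length s" "c < a" "thd (s!a) (s!b) = y" "thd (s!a) (s!c) = y"
      using ab ca unfolding Pe_def by (auto simp: thd_sym)
    have "s!b = s!c"
      by (rule thd_inj[of "s!a"]) (use h gd_mem[OF g] gd_neq[OF g] in auto)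
    hence "b = c" using h d by (simp add: nth_eq_iff_index_eq)
    thus False using h by simp
  qed
  have "card (fst ` Pe s y \<union> snd ` Pe s y) = card (fst ` Pe s y) + card (snd ` Pe s y)"
    using disj Pe_finite by (simp add: card_Un_disjoint)
  also have "\<dots> = 2 * card (Pe s y)" using card_image[OF inj1] card_image[OF inj2] by simp
  finally show ?thesis .
qed

lemma sum_N:
  assumes g: "gd s" and E: "E \<subseteq> {..<length s}"
  shows "(\<Sum>t\<in>E. card {q \<in> {..<length s}. s!t \<in> T s q}) \<le> 9 * length s"
proof -
  let ?m = "length s"
  have fE: "finite E" using E finite_subset by blast
  have "(\<Sum>t\<in>E. card {q \<in> {..<?m}. s!t \<in> T s q}) = (\<Sum>t\<in>E. \<Sum>q\<in>{..<?m}. if s!t \<in> T s q then 1 else 0)"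
    by (rule sum.cong) (auto simp: sum.If_cases intro!: arg_cong[where f=card])
  also have "\<dots> = (\<Sum>q\<in>{..<?m}. \<Sum>t\<in>E. if s!t \<in> T s q then 1 else 0)" by (rule sum.swap)
  also have "\<dots> = (\<Sum>q\<in>{..<?m}. card {t \<in> E. s!t \<in> T s q})"
    by (rule sum.cong) (use fE in \<open>auto simp: sum.If_cases intro!: arg_cong[where f=card]\<close>)
  also have "\<dots> \<le> (\<Sum>q\<in>{..<?m}. (9::nat))"
  proof (rule sum_mono)
    fix q assume "q \<in> {..<?m}"
    have inj: "inj_on (nth s) {t \<in> E. s!t \<in> T s q}"
      by (rule inj_on_nth) (use g E in \<open>auto simp: gd_def\<close>)
    have "card {t \<in> E. s!t \<in> T s q} \<le> card (T s q)"
      by (rule card_inj_on_le[OF inj]) (auto simp: T_card)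
    thus "card {t \<in> E. s!t \<in> T s q} \<le> 9" using T_card(1)[of s q] by simp
  qed
  also have "\<dots> = 9 * ?m" by simp
  finally show ?thesis .
qed

end

context sts begin

lemma swap_contra:
  assumes g: "gd s"
    and mn: "\<forall>s'. gd s' \<and> length s' = length s \<longrightarrow> Phi s \<le> Phi s'"
    and cM: "card (X - set s) \<le> 3"
    and tt: "t < length s" "t' < length s" "t \<noteq> t'" "t \<le> t' + 3" "t' \<le> t + 3"
    and y: "thd (s!t) (s!t') = y" "y \<notin> set s"
    and Nt: "card {q \<in> {..<length s}. s!t \<in> T s q} + 51 \<le> length s"
  shows False
proof -
  let ?m = "length s"
  define M where "M = X - set s"
  define near where "near c = {q::nat. q \<le> c+3 \<and> c \<le> q+3}" for c
  define C where "C = {c. c < ?m \<and> c \<noteq> t \<and> thd (s!t) (s!c) \<notin> set s}"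
  define G1 where "G1 = near t \<union> near t' \<union> (\<Union>c\<in>C-{t'}. near c)"
  define Nb where "Nb = {c. c < ?m \<and> c \<noteq> t \<and> c \<le> t+3 \<and> t \<le> c+3}"
  define W where "W = (\<lambda>(c,z). thd (s!c) z) ` (Nb \<times> M)"
  define G2 where "G2 = {q. q < ?m \<and> s!q \<in> T s t}"
  define G3 where "G3 = {q. q < ?m \<and> s!q \<in> W}"
  define G4 where "G4 = {q \<in> {..<?m}. s!t \<in> T s q}"
  have d: "distinct s" and sX: "set s \<subseteq> X" using g unfolding gd_def by auto
  have mem: "\<And>i. i < ?m \<Longrightarrow> s!i \<in> X" using gd_mem[OF g] .
  have neq: "\<And>i j. i < ?m \<Longrightarrow> j < ?m \<Longrightarrow> i \<noteq> j \<Longrightarrow> s!i \<noteq> s!j" using gd_neq[OF g] .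
  have yX: "y \<in> X" using thd_props(2)[OF mem[OF tt(1)] mem[OF tt(2)] neq[OF tt(1,2,3)]] y(1) by simp
  have yM: "y \<in> M" using yX y(2) M_def by simp
  have fM: "finite M" unfolding M_def by simp
  have cM': "card M \<le> 3" using cM M_def by simp
  have fnear: "finite (near c)" for c
  proof -
    have "near c \<subseteq> {..c+3}" unfolding near_def by auto
    thus ?thesis using finite_subset by blast
  qed
  have cnear: "card (near c) \<le> 7" for c unfolding near_def by (rule near_card)
  have fC: "finite C" unfolding C_def by simp
  have injC: "inj_on (\<lambda>c. thd (s!t) (s!c)) C"
  proof (rule inj_onI)
    fix c c' assume c: "c \<in> C" "c' \<in> C" and e: "thd (s!t) (s!c) = thd (s!t) (s!c')"
    have "s!c = s!c'"
      by (rule thd_inj[OF mem[OF tt(1)] _ _ _ _ e]) (use c C_def mem neq tt(1) in auto)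
    thus "c = c'" using c d unfolding C_def by (simp add: nth_eq_iff_index_eq)
  qed
  have imC: "(\<lambda>c. thd (s!t) (s!c)) ` C \<subseteq> M"
  proof
    fix z assume "z \<in> (\<lambda>c. thd (s!t) (s!c)) ` C"
    then obtain c where c: "c \<in> C" "z = thd (s!t) (s!c)" by auto
    have "z \<in> X" using thd_props(2)[OF mem[OF tt(1)], of "s!c"] c mem neq tt(1) unfolding C_def by auto
    thus "z \<in> M" using c M_def C_def by auto
  qed
  have cardC: "card C \<le> 3"
    using card_inj_on_le[OF injC imC fM] cM' by simp
  have t'C: "t' \<in> C" unfolding C_def using tt y by auto
  have cC1: "card (C - {t'}) \<le> 2" using cardC t'C fC by (simp add: card_Diff_singleton)
  have "card (\<Union>c\<in>C-{t'}. near c) \<le> (\<Sum>c\<in>C-{t'}. card (near c))"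
    by (rule card_UN_le) (use fC in simp)
  also have "\<dots> \<le> card (C - {t'}) * 7" using sum_bounded_above[of "C-{t'}" "\<lambda>c. card (near c)" 7] cnear by simp
  also have "\<dots> \<le> 14" using cC1 by simp
  finally have cU: "card (\<Union>c\<in>C-{t'}. near c) \<le> 14" .
  have c2: "card (near t \<union> near t') \<le> 10" unfolding near_def by (rule near2_card) (use tt in auto)
  have cG1: "card G1 \<le> 24"
  proof -
    have "card G1 \<le> card (near t \<union> near t') + card (\<Union>c\<in>C-{t'}. near c)"
      unfolding G1_def by (rule card_Un_le)
    thus ?thesis using c2 cU by simp
  qed
  have fG1: "finite G1" unfolding G1_def using fnear fC by auto
  have fNb: "finite Nb" unfolding Nb_def by simp
  have cNb: "card Nb \<le> 6" unfolding Nb_def by (rule nb_card)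
  have "card W \<le> card (Nb \<times> M)" unfolding W_def by (rule card_image_le) (use fNb fM in simp)
  also have "\<dots> = card Nb * card M" by (simp add: card_cartesian_product)
  also have "\<dots> \<le> 6 * 3" using cNb cM' by (intro mult_le_mono) auto
  finally have cW: "card W \<le> 18" by simp
  have fW: "finite W" unfolding W_def using fNb fM by simp
  have cG3: "card G3 \<le> 18"
  proof -
    have inj: "inj_on (nth s) G3" by (rule inj_on_nth[OF d]) (auto simp: G3_def)
    have "card G3 \<le> card W" by (rule card_inj_on_le[OF inj _ fW]) (auto simp: G3_def)
    thus ?thesis using cW by simp
  qed
  have fG3: "finite G3" unfolding G3_def by simp
  have tG13: "t \<in> G1 \<inter> G3"
  proof -
    have "t \<in> G1" unfolding G1_def near_def by simp
    moreover have "s!t = thd (s!t') y"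
      by (rule thd_swap[OF mem[OF tt(1)] mem[OF tt(2)] neq[OF tt(1,2,3)]]) (use y in simp)
    hence "s!t \<in> W" unfolding W_def Nb_def using tt yM
      by (intro image_eqI[where x="(t',y)"]) auto
    hence "t \<in> G3" unfolding G3_def using tt by simp
    ultimately show ?thesis by simp
  qed
  have cG13: "card (G1 \<union> G3) \<le> 41"
  proof -
    have "card (G1 \<inter> G3) \<ge> 1"
      using tG13 fG1 by (metis One_nat_def Suc_leI card_gt_0_iff empty_iff finite_Int)
    moreover have "card G1 + card G3 = card (G1 \<union> G3) + card (G1 \<inter> G3)"
      by (rule card_Un_Int[OF fG1 fG3])
    ultimately show ?thesis using cG1 cG3 by simp
  qed
  have cG2: "card G2 \<le> 9"
  proof -
    have inj: "inj_on (nth s) G2" by (rule inj_on_nth[OF d]) (auto simp: G2_def)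
    have "card G2 \<le> card (T s t)" by (rule card_inj_on_le[OF inj _ T_card(2)]) (auto simp: G2_def)
    thus ?thesis using T_card(1)[of s t] by simp
  qed
  have cG4: "card G4 + 51 \<le> ?m" using Nt G4_def by simp
  define Bad where "Bad = G1 \<union> G3 \<union> G2 \<union> G4"
  have fBad: "finite Bad" unfolding Bad_def G2_def G4_def using fG1 fG3 by auto
  have cBad: "card Bad < ?m"
  proof -
    have "card Bad \<le> card (G1 \<union> G3) + card G2 + card G4"
      unfolding Bad_def by (meson add_le_mono card_Un_le le_trans order_refl)
    thus ?thesis using cG13 cG2 cG4 by simp
  qed
  obtain q where q: "q < ?m" "q \<notin> Bad"
  proof -
    have "\<not> {..<?m} \<subseteq> Bad"
    proof
      assume "{..<?m} \<subseteq> Bad"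
      hence "card {..<?m} \<le> card Bad" by (rule card_mono[OF fBad])
      thus False using cBad by simp
    qed
    thus ?thesis using that by auto
  qed
  have qfar: "t + 4 \<le> q \<or> q + 4 \<le> t" using q unfolding Bad_def G1_def near_def by auto
  have qtq: "q \<noteq> t" using qfar by auto
  have qT1: "s!q \<notin> T s t" using q unfolding Bad_def G2_def by auto
  have qT2: "s!t \<notin> T s q" using q unfolding Bad_def G4_def by auto
  have qW: "s!q \<notin> W" using q unfolding Bad_def G3_def by auto
  have qnear: "\<And>c. c \<in> C \<Longrightarrow> \<not> (q \<le> c+3 \<and> c \<le> q+3)"
  proof -
    fix c assume c: "c \<in> C"
    show "\<not> (q \<le> c+3 \<and> c \<le> q+3)"
    proof (cases "c = t'")
      case True thus ?thesis using q unfolding Bad_def G1_def near_def by auto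
    next
      case False
      hence "q \<notin> near c" using q c unfolding Bad_def G1_def by auto
      thus ?thesis unfolding near_def by simp
    qed
  qed
  define s' where "s' = s[t := s!q, q := s!t]"
  have gs': "gd s'" unfolding s'_def by (rule gd_swap[OF g tt(1) q(1) qfar qT1 qT2])
  have ls': "length s' = ?m" unfolding s'_def by simp
  have sets': "set s' = set s" unfolding s'_def using tt(1) q(1) by simp
  have nth': "\<And>i. i < ?m \<Longrightarrow> s'!i = (if i = q then s!t else if i = t then s!q else s!i)"
    unfolding s'_def using tt(1) q(1) qtq by auto
  have keyt: "thd (s!q) (s!c) \<in> set s" if c: "c < ?m" "c \<noteq> t" "c \<le> t+3" "t \<le> c+3" for c
  proof (rule ccontr)
    assume nz: "thd (s!q) (s!c) \<notin> set s"
    have cq: "q \<noteq> c" using c qfar by auto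
    let ?z = "thd (s!q) (s!c)"
    have zX: "?z \<in> X" using thd_props(2)[OF mem[OF q(1)] mem[OF c(1)] neq[OF q(1) c(1) cq]] .
    have zM: "?z \<in> M" using zX nz M_def by simp
    have "s!q = thd (s!c) ?z" by (rule thd_swap[OF mem[OF q(1)] mem[OF c(1)] neq[OF q(1) c(1) cq]]) simp
    hence "s!q \<in> W" unfolding W_def Nb_def using c zM
      by (intro image_eqI[where x="(c,?z)"]) auto
    thus False using qW by simp
  qed
  have keyq: "thd (s!t) (s!c) \<in> set s" if c: "c < ?m" "c \<noteq> q" "c \<le> q+3" "q \<le> c+3" for c
  proof (rule ccontr)
    assume nz: "thd (s!t) (s!c) \<notin> set s"
    have ct: "c \<noteq> t" using c qfar by auto
    have "c \<in> C" unfolding C_def using c ct nz by simp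
    thus False using qnear c by auto
  qed
  let ?e = "(min t t', max t t')"
  have eP: "?e \<in> PP s"
  proof -
    have "thd (s!min t t') (s!max t t') = y" using y(1) by (cases "t \<le> t'") (auto simp: thd_sym min_def max_def)
    thus ?thesis unfolding PP_def using tt y(2) by auto
  qed
  have sub: "PP s' \<subseteq> PP s - {?e}"
  proof
    fix x assume x: "x \<in> PP s'"
    obtain a b where ab: "x = (a,b)" by (cases x)
    have h: "a < b" "b < ?m" "b \<le> a + 3" "thd (s'!a) (s'!b) \<notin> set s"
      using x ab ls' sets' unfolding PP_def by auto
    have am: "a < ?m" using h by simp
    show "x \<in> PP s - {?e}"
    proof (cases "a = t \<or> b = t")
      case True
      show ?thesis
      proof (cases "a = t")
        case at: True
        have bq: "b \<noteq> q" using h at qfar by auto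
        have "thd (s'!a) (s'!b) = thd (s!q) (s!b)" using nth'[OF am] nth'[OF h(2)] at bq qtq h(1) by simp
        moreover have "thd (s!q) (s!b) \<in> set s" using keyt[of b] h at by auto
        ultimately show ?thesis using h(4) by simp
      next
        case False
        hence bt: "b = t" using True by simp
        have aq: "a \<noteq> q" using h bt qfar by auto
        have "thd (s'!a) (s'!b) = thd (s!q) (s!a)" using nth'[OF am] nth'[OF h(2)] bt aq qtq h(1) by (simp add: thd_sym)
        moreover have "thd (s!q) (s!a) \<in> set s" using keyt[of a] h bt by auto
        ultimately show ?thesis using h(4) by simp
      qed
    next
      case nt: False
      show ?thesis
      proof (cases "a = q \<or> b = q")
        case True
        show ?thesis
        proof (cases "a = q")
          case aq: True
          have "thd (s'!a) (s'!b) = thd (s!t) (s!b)" using nth'[OF am] nth'[OF h(2)] aq nt h by simp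
          moreover have "thd (s!t) (s!b) \<in> set s" using keyq[of b] h aq by auto
          ultimately show ?thesis using h(4) by simp
        next
          case False
          hence bq: "b = q" using True by simp
          have "thd (s'!a) (s'!b) = thd (s!t) (s!a)" using nth'[OF am] nth'[OF h(2)] bq nt h by (simp add: thd_sym)
          moreover have "thd (s!t) (s!a) \<in> set s" using keyq[of a] h bq by auto
          ultimately show ?thesis using h(4) by simp
        qed
      next
        case nq: False
        have "thd (s!a) (s!b) \<notin> set s" using h(4) nth'[OF am] nth'[OF h(2)] nt nq by simp
        hence "x \<in> PP s" unfolding PP_def using ab h by simp
        moreover have "x \<noteq> ?e" using ab nt by (auto simp: min_def max_def)
        ultimately show ?thesis by simp
      qed
    qed
  qed
  have fPP: "finite (PP s)"
  proof -
    have "PP s \<subseteq> {..<?m} \<times> {..<?m}" unfolding PP_def by auto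
    thus ?thesis by (rule finite_subset) auto
  qed
  have "Phi s' \<le> card (PP s - {?e})" unfolding Phi_def by (rule card_mono) (use sub fPP in auto)
  also have "\<dots> < Phi s" unfolding Phi_def using card_Diff1_less[OF fPP eP] .
  finally have "Phi s' < Phi s" .
  moreover have "Phi s \<le> Phi s'" using mn gs' ls' by blast
  ultimately show False by simp
qed

end

context sts begin

lemma main_contra:
  assumes g: "gd s" and mx: "\<forall>s'. gd s' \<longrightarrow> length s' \<le> length s"
    and mn: "\<forall>s'. gd s' \<and> length s' = length s \<longrightarrow> Phi s \<le> Phi s'"
    and v: "v > 71" and y: "y \<in> X" "y \<notin> set s"
  shows False
proof -
  let ?m = "length s"
  define M where "M = X - set s"
  have d: "distinct s" and sX: "set s \<subseteq> X" using g unfolding gd_def by auto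
  have cs: "card (set s) = ?m" using distinct_card[OF d] .
  have cM: "card M = v - ?m" unfolding M_def using card_Diff_subset[OF finite_subset[OF sX] sX] cs by simp
  have mv: "?m \<le> v" using card_mono[OF _ sX] cs by simp
  have MT: "M \<subseteq> T s ?m"
  proof
    fix z assume z: "z \<in> M"
    show "z \<in> T s ?m"
    proof (rule ccontr)
      assume "z \<notin> T s ?m"
      hence "gd (s @ [z])" using gd_append[OF g] z M_def by auto
      thus False using mx by fastforce
    qed
  qed
  have cM3: "card M \<le> 3" using card_mono[OF T_card(2) MT] Tend_card[of s] by simp
  have m69: "?m \<ge> 69" using cM cM3 v by simp
  define J where "J = {j. j + 3 < ?m \<and> y \<notin> T s j}"
  define A where "A = T s ?m \<inter> set s"
  have JA: "J \<subseteq> {j. j < ?m \<and> s!j \<in> A}"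
  proof
    fix j assume j: "j \<in> J"
    have jm: "j + 3 < ?m" "y \<notin> T s j" using j J_def by auto
    have "s!j \<in> T s ?m"
    proof (rule ccontr)
      assume "s!j \<notin> T s ?m"
      hence "gd (s[j:=y] @ [s!j])" using gd_subst[OF g y jm(2) jm(1)] by simp
      thus False using mx by fastforce
    qed
    thus "j \<in> {j. j < ?m \<and> s!j \<in> A}" using jm A_def by auto
  qed
  have fA: "finite A" unfolding A_def using T_card(2) by simp
  have cJ: "card J \<le> card A"
  proof -
    have inj: "inj_on (nth s) {j. j < ?m \<and> s!j \<in> A}" by (rule inj_on_nth[OF d]) auto
    have "card {j. j < ?m \<and> s!j \<in> A} \<le> card A" by (rule card_inj_on_le[OF inj _ fA]) auto
    moreover have "card J \<le> card {j. j < ?m \<and> s!j \<in> A}" by (rule card_mono[OF _ JA]) simp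
    ultimately show ?thesis by simp
  qed
  have cAM: "card A + card M \<le> 3"
  proof -
    have "A \<union> M \<subseteq> T s ?m" using MT A_def by auto
    hence "card (A \<union> M) \<le> card (T s ?m)" by (rule card_mono[OF T_card(2)])
    moreover have "card (A \<union> M) = card A + card M"
      by (rule card_Un_disjoint) (use fA M_def A_def in auto)
    ultimately show ?thesis using Tend_card[of s] by simp
  qed
  define Sp where "Sp = {j. j < ?m \<and> y \<in> T s j}"
  have "{..<?m-3} \<subseteq> Sp \<union> J" unfolding Sp_def J_def by auto
  moreover have "finite (Sp \<union> J)"
    by (rule finite_subset[of _ "{..<?m}"]) (auto simp: Sp_def J_def)
  ultimately have "card {..<?m-3} \<le> card (Sp \<union> J)" by (intro card_mono) auto
  hence "?m - 3 \<le> card Sp + card J" using card_Un_le[of Sp J] by simp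
  hence cSp: "card Sp \<ge> 66" using cJ cAM cM v mv by linarith
  have SpU: "Sp \<subseteq> (\<Union>e\<in>Pe s y. {j. close3 (fst e) (snd e) j})"
  proof
    fix j assume "j \<in> Sp"
    hence "y \<in> T s j" unfolding Sp_def by simp
    then obtain a b where ab: "a < b" "b < ?m" "close3 a b j" "y = thd (s!a) (s!b)"
      unfolding T_def by auto
    hence "(a,b) \<in> Pe s y" unfolding Pe_def close3_def by auto
    thus "j \<in> (\<Union>e\<in>Pe s y. {j. close3 (fst e) (snd e) j})" using ab by force
  qed
  have "card Sp \<le> card (\<Union>e\<in>Pe s y. {j. close3 (fst e) (snd e) j})"
  proof (rule card_mono[OF _ SpU])
    have "\<And>e. finite {j. close3 (fst e) (snd e) j}"
    proof -
      fix e
      have "{j. close3 (fst e) (snd e) j} \<subseteq> {..fst e + 3}" unfolding close3_def by auto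
      thus "finite {j. close3 (fst e) (snd e) j}" using finite_subset by blast
    qed
    thus "finite (\<Union>e\<in>Pe s y. {j. close3 (fst e) (snd e) j})" using Pe_finite by simp
  qed
  also have "\<dots> \<le> (\<Sum>e\<in>Pe s y. card {j. close3 (fst e) (snd e) j})"
    by (rule card_UN_le[OF Pe_finite])
  also have "\<dots> \<le> card (Pe s y) * 4"
  proof -
    have "\<And>e. e \<in> Pe s y \<Longrightarrow> card {j. close3 (fst e) (snd e) j} \<le> 4"
    proof -
      fix e assume "e \<in> Pe s y"
      hence "fst e < snd e" "snd e \<le> fst e + 3" unfolding Pe_def by auto
      thus "card {j. close3 (fst e) (snd e) j} \<le> 4" by (rule spoil4)
    qed
    thus ?thesis using sum_bounded_above[of "Pe s y" "\<lambda>e. card {j. close3 (fst e) (snd e) j}" 4] by simp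
  qed
  finally have cPe: "card (Pe s y) \<ge> 17" using cSp by simp
  define E where "E = fst ` Pe s y \<union> snd ` Pe s y"
  have cE: "card E \<ge> 34" using edges_card[OF g, of y] cPe E_def by simp
  have Em: "E \<subseteq> {..<?m}" unfolding E_def Pe_def by auto
  define N where "N t = card {q \<in> {..<?m}. s!t \<in> T s q}" for t
  have sN: "(\<Sum>t\<in>E. N t) \<le> 9 * ?m" unfolding N_def by (rule sum_N[OF g Em])
  obtain t where tE: "t \<in> E" and Nt: "N t + 51 \<le> ?m"
  proof (rule ccontr)
    assume "\<not> thesis"
    hence all: "\<And>t. t \<in> E \<Longrightarrow> ?m - 50 \<le> N t" using that by fastforce
    have "card E * (?m - 50) \<le> (\<Sum>t\<in>E. N t)"
      using sum_bounded_below[of E "?m - 50" N] all by simp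
    moreover have "34 * (?m - 50) \<le> card E * (?m - 50)" using cE by (rule mult_le_mono1)
    ultimately have "34 * (?m - 50) \<le> 9 * ?m" using sN by linarith
    thus False using m69 by linarith
  qed
  obtain t' where tt: "t' < ?m" "t \<noteq> t'" "t \<le> t' + 3" "t' \<le> t + 3" "thd (s!t) (s!t') = y"
  proof (cases "t \<in> fst ` Pe s y")
    case True
    then obtain b where "(t,b) \<in> Pe s y" by force
    thus ?thesis using that unfolding Pe_def by auto
  next
    case False
    hence "t \<in> snd ` Pe s y" using tE E_def by simp
    then obtain a where "(a,t) \<in> Pe s y" by force
    hence h: "a < t" "t < ?m" "t \<le> a + 3" "thd (s!a) (s!t) = y" unfolding Pe_def by auto
    have "thd (s!t) (s!a) = y" using h(4) thd_sym by metis
    thus ?thesis by (intro that[of a]) (use h in auto)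
  qed
  have tm: "t < ?m" using tE Em by auto
  show False
    by (rule swap_contra[OF g mn _ tm tt(1,2,3,4,5) y(2)]) (use cM3 M_def Nt N_def in auto)
qed

lemma gd_good: assumes "gd s" shows "good_sequencing 4 B s"
  unfolding good_sequencing_def
proof (intro allI impI ballI notI)
  fix i b assume i: "i + 4 \<le> length s" and bB: "b \<in> B" and sub: "b \<subseteq> set (take 4 (drop i s))"
  obtain x y z where b: "b = {x,y,z}" "x \<noteq> y" "y \<noteq> z" "x \<noteq> z"
    using blk_card[OF bB] card_3_iff by metis
  let ?w = "take 4 (drop i s)"
  have lw: "length ?w = 4" using i by simp
  have nw: "\<And>k. k < 4 \<Longrightarrow> ?w ! k = s ! (i + k)" using i by simp
  have "x \<in> set ?w" "y \<in> set ?w" "z \<in> set ?w" using sub b by auto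
  then obtain kx ky kz where k: "kx < 4" "ky < 4" "kz < 4" "?w!kx = x" "?w!ky = y" "?w!kz = z"
    unfolding in_set_conv_nth lw by metis
  have e: "s!(i+kx) = x" "s!(i+ky) = y" "s!(i+kz) = z" using k nw by auto
  have "kx \<noteq> ky" "ky \<noteq> kz" "kx \<noteq> kz" using e b by auto
  hence c: "close3 (i+kx) (i+ky) (i+kz)" unfolding close3_def using k by auto
  have "{s!(i+kx), s!(i+ky), s!(i+kz)} \<notin> B"
    using assms c k i unfolding gd_def by auto
  thus False using e b bB by simp
qed

end

theorem theorem3:
  fixes v :: nat and B :: "nat set set"
  assumes "v > 71"
    and "steiner_triple_system {1..v} B"
  shows "\<exists>xs. sequencing {1..v} xs \<and> good_sequencing 4 B xs"
proof -
  interpret sts v B using assms(2) by (unfold_locales)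
  have bnd: "\<forall>n. (\<exists>s. gd s \<and> length s = n) \<longrightarrow> n \<le> v"
  proof (intro allI impI)
    fix n assume "\<exists>s. gd s \<and> length s = n"
    then obtain s where s: "gd s" "length s = n" by blast
    have "card (set s) \<le> card X" by (rule card_mono) (use s in \<open>auto simp: gd_def\<close>)
    thus "n \<le> v" using s distinct_card[of s] unfolding gd_def by auto
  qed
  have g0: "gd []" unfolding gd_def by simp
  have bnd': "\<forall>s. gd s \<longrightarrow> length s < v + 1" using bnd by auto
  obtain s0 where s0': "gd s0" "\<forall>s. gd s \<longrightarrow> length s \<le> length s0"
    using ex_has_greatest_nat[of gd "[]" length "v+1"] g0 bnd' by blast
  define n0 where "n0 = length s0"
  have s0: "gd s0" "length s0 = n0" using s0' n0_def by auto
  have n0: "\<forall>n. (\<exists>s. gd s \<and> length s = n) \<longrightarrow> n \<le> n0" using s0' n0_def by auto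
  obtain s where s: "gd s \<and> length s = n0" "\<forall>s'. gd s' \<and> length s' = n0 \<longrightarrow> Phi s \<le> Phi s'"
    using ex_has_least_nat[of "\<lambda>s. gd s \<and> length s = n0" s0 Phi] s0 by blast
  have mx: "\<forall>s'. gd s' \<longrightarrow> length s' \<le> length s" using n0 s(1) by auto
  have mn: "\<forall>s'. gd s' \<and> length s' = length s \<longrightarrow> Phi s \<le> Phi s'" using s by auto
  have sX: "set s \<subseteq> X" "distinct s" using s(1) unfolding gd_def by auto
  have "set s = X"
  proof (rule ccontr)
    assume "set s \<noteq> X"
    then obtain y where "y \<in> X" "y \<notin> set s" using sX by blast
    thus False using main_contra[OF conjunct1[OF s(1)] mx mn assms(1)] by blast
  qed
  hence "sequencing {1..v} s" unfolding sequencing_def using sX by simp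
  moreover have "good_sequencing 4 B s" using gd_good s(1) by blast
  ultimately show ?thesis by blast
qed


end
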